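(* Let $p$ be an odd prime and let $\mathcal{A}\subseteq\mathbb{F}_p$. Then \[|T_{2,2}(\mathcal{A}\times\mathcal{A})|\ge \frac{1}{6}\left(|\mathcal{A}|^2-2\right)\cdot|\Delta_{\mathbb{F}_p}(\mathcal{A}\times\mathcal{A})|,\] where $\Delta_{\mathbb{F}_p}(\mathcal{A}\times\mathcal{A})=\{\|\mathbf{x}-\mathbf{y}\|:\mathbf{x},\mathbf{y}\in\mathcal{A}\times\mathcal{A}\}$ is the set of distinct distances determined by points of $\mathcal{A}\times\mathcal{A}$.
   Context: For $\mathbf{x}=(x_1,x_2),\mathbf{y}=(y_1,y_2)\in\mathbb{F}_p^2$, $\|\mathbf{x}-\mathbf{y}\|=(x_1-y_1)^2+(x_2-y_2)^2$. For $\mathcal{E}\subseteq\mathbb{F}_p^2$, a triangle determined by $\mathcal{E}$ is a triple $(\mathbf{x}_1,\mathbf{x}_2,\mathbf{x}_3)$ of points of $\mathcal{E}$. Two triangles $(\mathbf{x}_1,\mathbf{x}_2,\mathbf{x}_3)$ and $(\mathbf{y}_1,\mathbf{y}_2,\mathbf{y}_3)$ are in the same congruence class if there exist an orthogonal $2\times2$ matrix $\theta$ over $\mathbb{F}_p$ ($\theta^T\theta=I$) and $\mathbf{z}\in\mathbb{F}_p^2$ with $\mathbf{z}+\theta\mathbf{x}_i=\mathbf{y}_i$ for $i=1,2,3$. $T_{2,2}(\mathcal{E})$ is the set of congruence classes of triangles determined by points of $\mathcal{E}$. *)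

theory Defs
  imports Complex_Main "HOL-Computational_Algebra.Primes"
begin

text \<open>F_p is modelled by the residues {0..<p} of int with arithmetic mod p;
  points of F_p^2 are pairs of such residues.\<close>

definition Fp :: "int \<Rightarrow> int set" where
  "Fp p = {0..<p}"

definition sqdist :: "int \<Rightarrow> int \<times> int \<Rightarrow> int \<times> int \<Rightarrow> int" where
  "sqdist p x y = ((fst x - fst y)^2 + (snd x - snd y)^2) mod p"

text \<open>A 2x2 matrix [[a,b],[c,d]] is encoded as (a,b,c,d).\<close>
definition orth :: "int \<Rightarrow> int \<times> int \<times> int \<times> int \<Rightarrow> bool" where
  "orth p M = (case M of (a,b,c,d) \<Rightarrow>
     a \<in> Fp p \<and> b \<in> Fp p \<and> c \<in> Fp p \<and> d \<in> Fp p \<and>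
     (a*a + c*c) mod p = 1 \<and> (a*b + c*d) mod p = 0 \<and> (b*b + d*d) mod p = 1)"

definition mat_app :: "int \<Rightarrow> int \<times> int \<times> int \<times> int \<Rightarrow> int \<times> int \<Rightarrow> int \<times> int" where
  "mat_app p M x = (case M of (a,b,c,d) \<Rightarrow>
     ((a * fst x + b * snd x) mod p, (c * fst x + d * snd x) mod p))"

definition rigid :: "int \<Rightarrow> int \<times> int \<Rightarrow> int \<times> int \<times> int \<times> int \<Rightarrow> int \<times> int \<Rightarrow> int \<times> int" where
  "rigid p z M x = ((fst z + fst (mat_app p M x)) mod p, (snd z + snd (mat_app p M x)) mod p)"

definition triangles :: "(int \<times> int) set \<Rightarrow> ((int \<times> int) \<times> (int \<times> int) \<times> (int \<times> int)) set" where
  "triangles E = {(x1, x2, x3). x1 \<in> E \<and> x2 \<in> E \<and> x3 \<in> E}"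

definition congruent :: "int \<Rightarrow> (int \<times> int) \<times> (int \<times> int) \<times> (int \<times> int)
    \<Rightarrow> (int \<times> int) \<times> (int \<times> int) \<times> (int \<times> int) \<Rightarrow> bool" where
  "congruent p t s = (case t of (x1, x2, x3) \<Rightarrow> case s of (y1, y2, y3) \<Rightarrow>
     (\<exists>M z. orth p M \<and> z \<in> Fp p \<times> Fp p \<and>
        rigid p z M x1 = y1 \<and> rigid p z M x2 = y2 \<and> rigid p z M x3 = y3))"

definition T22 :: "int \<Rightarrow> (int \<times> int) set
    \<Rightarrow> ((int \<times> int) \<times> (int \<times> int) \<times> (int \<times> int)) set set" where
  "T22 p E = (\<lambda>t. {s \<in> triangles (Fp p \<times> Fp p). congruent p t s}) ` triangles E"

definition Delta :: "int \<Rightarrow> (int \<times> int) set \<Rightarrow> int set" where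
  "Delta p E = {sqdist p x y | x y. x \<in> E \<and> y \<in> E}"

end

theory Submission
  imports Defs
begin

lemma not2: "odd (p::int) \<Longrightarrow> prime p \<Longrightarrow> \<not> p dvd 2"
proof
  assume "odd p" "prime p" "p dvd 2"
  then have "p \<le> 2" by (simp add: zdvd_imp_le)
  moreover have "p \<ge> 2" using \<open>prime p\<close> by (simp add: prime_ge_2_int)
  ultimately have "p = 2" by simp
  with \<open>odd p\<close> show False by simp
qed

lemma eq_of_dvd: "0 \<le> (a::int) \<Longrightarrow> a < p \<Longrightarrow> 0 \<le> b \<Longrightarrow> b < p \<Longrightarrow> p dvd a - b \<Longrightarrow> a = b"
  by (metis mod_eq_dvd_iff mod_pos_pos_trivial)

lemma key:
  fixes p x1 x2 y1 y2 a1 a2 b1 b2 :: int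
  assumes pp: "prime p" and po: "odd p"
  and d: "\<not> p dvd ((x1-y1)^2+(x2-y2)^2)"
  and h1: "p dvd (((x1-a1)^2+(x2-a2)^2) - ((x1-b1)^2+(x2-b2)^2))"
  and h2: "p dvd (((y1-a1)^2+(y2-a2)^2) - ((y1-b1)^2+(y2-b2)^2))"
  and hb: "(2*(((a1-x1)*(y2-x2) - (a2-x2)*(y1-x1)) mod p) < p)
         = (2*(((b1-x1)*(y2-x2) - (b2-x2)*(y1-x1)) mod p) < p)"
  shows "p dvd (a1 - b1) \<and> p dvd (a2 - b2)"
proof -
  define u1 u2 w1 w2 v1 v2 where "u1 = a1-x1" "u2 = a2-x2" "w1 = b1-x1" "w2 = b2-x2"
     "v1 = y1-x1" "v2 = y2 - x2"
  define c c' s s' dv where "c = u1*v1+u2*v2" "c' = w1*v1+w2*v2" "s = u1*v2 - u2*v1"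
    "s' = w1*v2 - w2*v1" "dv = v1^2+v2^2"
  have p0: "p > 0" using pp prime_gt_0_int by blast
  have "2*(c-c') = (((x1-a1)^2+(x2-a2)^2) - ((x1-b1)^2+(x2-b2)^2)) - (((y1-a1)^2+(y2-a2)^2) - ((y1-b1)^2+(y2-b2)^2))"
    unfolding u1_u2_w1_w2_v1_v2_def c_c'_s_s'_dv_def by (simp add: algebra_simps power2_eq_square)
  then have "p dvd 2*(c-c')" using h1 h2 by (metis dvd_diff)
  then have cc: "p dvd c - c'" using pp po not2[OF po pp] prime_dvd_mult_iff[OF pp, of 2 "c-c'"] by blast
  have "(s-s')*(s+s') = (((x1-a1)^2+(x2-a2)^2) - ((x1-b1)^2+(x2-b2)^2))*dv - (c-c')*(c+c')"
    unfolding u1_u2_w1_w2_v1_v2_def c_c'_s_s'_dv_def by (simp add: algebra_simps power2_eq_square)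
  then have "p dvd (s-s')*(s+s')" using h1 cc by (metis dvd_diff dvd_mult2)
  then have ss0: "p dvd s - s' \<or> p dvd s + s'" using pp by (simp add: prime_dvd_mult_iff)
  have hb': "(2*(s mod p) < p) = (2*(s' mod p) < p)" using hb unfolding u1_u2_w1_w2_v1_v2_def c_c'_s_s'_dv_def .
  have ss: "p dvd s - s'"
  proof (cases "p dvd s - s'")
    case False
    then have "p dvd s + s'" using ss0 by blast
    moreover have "(s mod p + s' mod p) mod p = (s+s') mod p" by (rule mod_add_eq)
    ultimately have "p dvd (s mod p) + (s' mod p)" unfolding dvd_eq_mod_eq_0 by simp
    then obtain k where k: "(s mod p) + (s' mod p) = p*k" by blast
    have r: "0 \<le> s mod p" "s mod p < p" "0 \<le> s' mod p" "s' mod p < p" using p0 by auto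
    have "k \<ge> 0"
    proof (rule ccontr)
      assume "\<not> k \<ge> 0" then have "p*k < 0" using p0 by (simp add: mult_pos_neg)
      then show False using k r by linarith
    qed
    moreover have "k < 2"
    proof (rule ccontr)
      assume "\<not> k < 2" then have "p*k \<ge> p*2" using p0 by simp
      then show False using k r by linarith
    qed
    ultimately have "k = 0 \<or> k = 1" by linarith
    then have "s mod p = s' mod p"
    proof
      assume "k = 0" then have "s mod p + s' mod p = 0" using k by simp
      then show ?thesis using r by linarith
    next
      assume "k = 1"
      then have e: "s' mod p = p - s mod p" using k by simp
      have "2 * (s mod p) \<noteq> p" using po by (metis even_mult_iff even_numeral)
      then show ?thesis using hb' e by linarith
    qed
    then show ?thesis by (simp add: mod_eq_dvd_iff)
  qed (simp)
  have pd: "\<not> p dvd dv" using d unfolding u1_u2_w1_w2_v1_v2_def c_c'_s_s'_dv_def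
    by (simp add: power2_commute)
  have "dv*(u1-w1) = (c-c')*v1 + (s-s')*v2"
    unfolding c_c'_s_s'_dv_def by (simp add: algebra_simps power2_eq_square)
  then have "p dvd dv*(u1-w1)" using cc ss by simp
  then have A: "p dvd u1 - w1" using pd pp by (simp add: prime_dvd_mult_iff)
  have "dv*(u2-w2) = (c-c')*v2 - (s-s')*v1"
    unfolding c_c'_s_s'_dv_def by (simp add: algebra_simps power2_eq_square)
  then have "p dvd dv*(u2-w2)" using cc ss by simp
  then have B: "p dvd u2 - w2" using pd pp by (simp add: prime_dvd_mult_iff)
  show ?thesis using A B unfolding u1_u2_w1_w2_v1_v2_def by simp
qed
lemma L1: "((P mod p - Q mod p)^2 + (R mod p - S mod p)^2) mod p = ((P-Q)^2 + (R-S)^2) mod (p::int)"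
proof -
  have a: "(P mod p - Q mod p) mod p = (P-Q) mod p" by (rule mod_diff_eq)
  have b: "(R mod p - S mod p) mod p = (R-S) mod p" by (rule mod_diff_eq)
  have a2: "(P mod p - Q mod p)^2 mod p = (P-Q)^2 mod p"
    using power_mod[of "P mod p - Q mod p" p 2] power_mod[of "P-Q" p 2] a by simp
  have b2: "(R mod p - S mod p)^2 mod p = (R-S)^2 mod p"
    using power_mod[of "R mod p - S mod p" p 2] power_mod[of "R-S" p 2] b by simp
  show ?thesis by (rule mod_add_cong[OF a2 b2])
qed

lemma orth_red:
  assumes "(A::int) mod p = 1" "B mod p = 0" "C mod p = 1"
  shows "(A*e + 2*B*f + C*g) mod p = (e+g) mod p"
proof -
  have one: "1 mod p = (1::int)" using assms(1) by (metis mod_mod_trivial)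
  have "p dvd A - 1" using mod_eq_dvd_iff[of A p 1] assms(1) one by simp
  moreover have "p dvd B" using assms(2) by (simp add: dvd_eq_mod_eq_0)
  moreover have "p dvd C - 1" using mod_eq_dvd_iff[of C p 1] assms(3) one by simp
  ultimately have "p dvd (A-1)*e + 2*B*f + (C-1)*g" by simp
  moreover have "(A-1)*e + 2*B*f + (C-1)*g = (A*e + 2*B*f + C*g) - (e+g)" by (simp add: algebra_simps)
  ultimately show ?thesis by (simp add: mod_eq_dvd_iff)
qed
lemma rigid_pres:
  assumes "orth p M"
  shows "sqdist p (rigid p z M x) (rigid p z M y) = sqdist p x y"
proof -
  obtain a b c d where M: "M = (a,b,c,d)" by (cases M) auto
  obtain z1 z2 where z: "z = (z1,z2)" by (cases z)
  obtain x1 x2 where x: "x = (x1,x2)" by (cases x)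
  obtain y1 y2 where y: "y = (y1,y2)" by (cases y)
  have o: "(a*a + c*c) mod p = 1" "(a*b + c*d) mod p = 0" "(b*b + d*d) mod p = 1"
    using assms unfolding M orth_def by auto
  have "sqdist p (rigid p z M x) (rigid p z M y)
     = (((z1 + (a*x1+b*x2) mod p) - (z1 + (a*y1+b*y2) mod p))^2
       + ((z2 + (c*x1+d*x2) mod p) - (z2 + (c*y1+d*y2) mod p))^2) mod p"
    unfolding sqdist_def rigid_def mat_app_def M z x y fst_conv snd_conv prod.case by (rule L1)
  also have "\<dots> = (((a*x1+b*x2) mod p - (a*y1+b*y2) mod p)^2
       + ((c*x1+d*x2) mod p - (c*y1+d*y2) mod p)^2) mod p" by (simp only: add_diff_cancel_left)
  also have "\<dots> = (((a*x1+b*x2) - (a*y1+b*y2))^2 + ((c*x1+d*x2) - (c*y1+d*y2))^2) mod p"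
    by (rule L1)
  also have "((a*x1+b*x2) - (a*y1+b*y2))^2 + ((c*x1+d*x2) - (c*y1+d*y2))^2
     = (a*a+c*c)*(x1-y1)^2 + 2*(a*b+c*d)*((x1-y1)*(x2-y2)) + (b*b+d*d)*(x2-y2)^2"
    by (simp add: algebra_simps power2_eq_square)
  also have "(\<dots>) mod p = ((x1-y1)^2 + (x2-y2)^2) mod p" by (rule orth_red[OF o])
  also have "\<dots> = sqdist p x y" by (simp only: sqdist_def x y fst_conv snd_conv)
  finally show ?thesis .
qed

definition cr :: "int \<Rightarrow> int\<times>int \<Rightarrow> int\<times>int \<Rightarrow> int\<times>int \<Rightarrow> int" where
  "cr p x y z = ((fst z - fst x)*(snd y - snd x) - (snd z - snd x)*(fst y - fst x)) mod p"

lemma key2: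
  assumes pp: "prime p" and po: "odd p" and d: "sqdist p x y \<noteq> 0"
  and z: "z \<in> Fp p \<times> Fp p" and z': "z' \<in> Fp p \<times> Fp p"
  and h1: "sqdist p x z = sqdist p x z'" and h2: "sqdist p y z = sqdist p y z'"
  and hb: "(2 * cr p x y z < p) = (2 * cr p x y z' < p)"
  shows "z = z'"
proof -
  obtain x1 x2 where x: "x = (x1,x2)" by (cases x)
  obtain y1 y2 where y: "y = (y1,y2)" by (cases y)
  obtain a1 a2 where a: "z = (a1,a2)" by (cases z)
  obtain b1 b2 where b: "z' = (b1,b2)" by (cases z')
  have "p dvd (a1 - b1) \<and> p dvd (a2 - b2)"
  proof (rule key[OF pp po])
    show "\<not> p dvd ((x1-y1)^2+(x2-y2)^2)" using d unfolding sqdist_def x y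
      by (simp add: dvd_eq_mod_eq_0)
    show "p dvd (((x1-a1)^2+(x2-a2)^2) - ((x1-b1)^2+(x2-b2)^2))"
      using h1 unfolding sqdist_def x a b by (simp add: mod_eq_dvd_iff)
    show "p dvd (((y1-a1)^2+(y2-a2)^2) - ((y1-b1)^2+(y2-b2)^2))"
      using h2 unfolding sqdist_def y a b by (simp add: mod_eq_dvd_iff)
    show "(2*(((a1-x1)*(y2-x2) - (a2-x2)*(y1-x1)) mod p) < p)
         = (2*(((b1-x1)*(y2-x2) - (b2-x2)*(y1-x1)) mod p) < p)"
      using hb unfolding cr_def x y a b by simp
  qed
  moreover have "0 \<le> a1" "a1 < p" "0 \<le> a2" "a2 < p" using z unfolding a Fp_def by auto
  moreover have "0 \<le> b1" "b1 < p" "0 \<le> b2" "b2 < p" using z' unfolding b Fp_def by auto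
  ultimately show ?thesis unfolding a b using eq_of_dvd by blast
qed

lemma rigid_id:
  assumes "x \<in> Fp p \<times> Fp p"
  shows "rigid p (0,0) (1,0,0,1) x = x"
  using assms unfolding rigid_def mat_app_def Fp_def by (cases x) auto

theorem lemma2p5:
  fixes p :: int and A :: "int set"
  assumes "prime p" and "odd p" and "A \<subseteq> Fp p"
  shows "real (card (T22 p (A \<times> A)))
           \<ge> 1/6 * (real (card A)^2 - 2) * real (card (Delta p (A \<times> A)))"
proof -
  note pp = assms(1) and po = assms(2)
  define E where "E = A \<times> A"
  define T where "T = triangles E"
  define tri :: "(int\<times>int)\<times>(int\<times>int)\<times>(int\<times>int) \<Rightarrow> int\<times>int\<times>int"
    where "tri = (\<lambda>t. case t of (x1,x2,x3) \<Rightarrow> (sqdist p x1 x2, sqdist p x1 x3, sqdist p x2 x3))"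
  define cls where "cls = (\<lambda>t. {s \<in> triangles (Fp p \<times> Fp p). congruent p t s})"
  define \<Delta> where "\<Delta> = Delta p E"
  have p1: "p > 1" using pp prime_gt_1_int by blast
  have finA: "finite A" using assms(3) finite_subset[of A "{0..<p}"] unfolding Fp_def by blast
  have EF: "E \<subseteq> Fp p \<times> Fp p" unfolding E_def using assms(3) by auto
  have finE: "finite E" unfolding E_def using finA by simp
  have TE: "T = E \<times> E \<times> E" unfolding T_def triangles_def by auto
  have finT: "finite T" unfolding TE using finE by simp
  have T22eq: "T22 p (A \<times> A) = cls ` T" unfolding T22_def cls_def T_def E_def ..
  have one: "1 \<in> Fp p" "0 \<in> Fp p" using p1 unfolding Fp_def by auto
  have orth1: "orth p (1,0,0,1)" unfolding orth_def using one p1 by simp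
  have self: "t \<in> cls t" if "t \<in> T" for t
  proof -
    obtain x1 x2 x3 where t: "t = (x1,x2,x3)" by (cases t) auto
    have xs: "x1 \<in> Fp p \<times> Fp p" "x2 \<in> Fp p \<times> Fp p" "x3 \<in> Fp p \<times> Fp p"
      using that EF unfolding TE t by auto
    have "congruent p t t" unfolding t congruent_def
      using orth1 one rigid_id[OF xs(1)] rigid_id[OF xs(2)] rigid_id[OF xs(3)] by blast
    moreover have "t \<in> triangles (Fp p \<times> Fp p)" using xs unfolding t triangles_def by simp
    ultimately show ?thesis unfolding cls_def by simp
  qed
  have congtri: "tri s = tri t" if cg: "congruent p t s" for s t
  proof -
    obtain x1 x2 x3 where t: "t = (x1,x2,x3)" by (cases t) auto
    obtain y1 y2 y3 where s: "s = (y1,y2,y3)" by (cases s) auto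
    obtain M z where "orth p M" "rigid p z M x1 = y1" "rigid p z M x2 = y2" "rigid p z M x3 = y3"
      using cg unfolding t s congruent_def prod.case by blast
    then show ?thesis unfolding t s tri_def using rigid_pres by (metis case_prod_conv)
  qed
  have wd: "tri t = tri t'" if "t \<in> T" "t' \<in> T" "cls t = cls t'" for t t'
  proof -
    have "t' \<in> cls t" using self[OF that(2)] that(3) by simp
    then have "congruent p t t'" unfolding cls_def by simp
    then show ?thesis using congtri by simp
  qed
  define \<phi> where "\<phi> = (\<lambda>C. tri (SOME t. t \<in> T \<and> cls t = C))"
  have "tri ` T = \<phi> ` (cls ` T)"
  proof
    show "tri ` T \<subseteq> \<phi> ` cls ` T"
    proof
      fix w assume "w \<in> tri ` T"
      then obtain t where t: "t \<in> T" "w = tri t" by blast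
      have "\<exists>t'. t' \<in> T \<and> cls t' = cls t" using t by blast
      then have "(SOME t'. t' \<in> T \<and> cls t' = cls t) \<in> T \<and> cls (SOME t'. t' \<in> T \<and> cls t' = cls t) = cls t"
        by (rule someI_ex)
      then have "\<phi> (cls t) = w" unfolding \<phi>_def t(2) using wd t(1) by blast
      then show "w \<in> \<phi> ` cls ` T" using t by blast
    qed
    show "\<phi> ` cls ` T \<subseteq> tri ` T"
    proof
      fix w assume "w \<in> \<phi> ` cls ` T"
      then obtain t where t: "t \<in> T" "w = \<phi> (cls t)" by blast
      have "\<exists>t'. t' \<in> T \<and> cls t' = cls t" using t by blast
      then have "(SOME t'. t' \<in> T \<and> cls t' = cls t) \<in> T \<and> cls (SOME t'. t' \<in> T \<and> cls t' = cls t) = cls t"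
        by (rule someI_ex)
      then show "w \<in> tri ` T" unfolding t(2) \<phi>_def by blast
    qed
  qed
  then have cardA: "card (tri ` T) \<le> card (T22 p (A \<times> A))"
    unfolding T22eq by (metis card_image_le finT finite_imageI)
  define pk where "pk = (\<lambda>d. SOME xy. fst xy \<in> E \<and> snd xy \<in> E \<and> sqdist p (fst xy) (snd xy) = d)"
  have pk: "fst (pk d) \<in> E \<and> snd (pk d) \<in> E \<and> sqdist p (fst (pk d)) (snd (pk d)) = d" if dD: "d \<in> \<Delta>" for d
  proof -
    obtain x y where "x \<in> E" "y \<in> E" "sqdist p x y = d" using dD unfolding \<Delta>_def Delta_def by blast
    then have "\<exists>xy. fst xy \<in> E \<and> snd xy \<in> E \<and> sqdist p (fst xy) (snd xy) = d" by (metis fst_conv snd_conv)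
    then show ?thesis unfolding pk_def by (rule someI_ex)
  qed
  define h where "h = (\<lambda>(d,z). (tri (fst (pk d), snd (pk d), z), 2 * cr p (fst (pk d)) (snd (pk d)) z < p))"
  have inj: "inj_on h ((\<Delta> - {0}) \<times> E)"
  proof (rule inj_onI)
    fix a b assume a: "a \<in> (\<Delta> - {0}) \<times> E" and b: "b \<in> (\<Delta> - {0}) \<times> E" and hab: "h a = h b"
    obtain d z where ad: "a = (d,z)" by (cases a)
    obtain d' z' where bd: "b = (d',z')" by (cases b)
    have d: "d \<in> \<Delta>" "d \<noteq> 0" "z \<in> E" using a ad by auto
    have d': "d' \<in> \<Delta>" "d' \<noteq> 0" "z' \<in> E" using b bd by auto
    have e: "tri (fst (pk d), snd (pk d), z) = tri (fst (pk d'), snd (pk d'), z')"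
      "(2 * cr p (fst (pk d)) (snd (pk d)) z < p) = (2 * cr p (fst (pk d')) (snd (pk d')) z' < p)"
      using hab unfolding ad bd h_def by auto
    have "d = d'" using e(1) pk[OF d(1)] pk[OF d'(1)] unfolding tri_def by simp
    then have e2: "sqdist p (fst (pk d)) z = sqdist p (fst (pk d)) z'"
      "sqdist p (snd (pk d)) z = sqdist p (snd (pk d)) z'"
      "(2 * cr p (fst (pk d)) (snd (pk d)) z < p) = (2 * cr p (fst (pk d)) (snd (pk d)) z' < p)"
      using e unfolding tri_def by auto
    have "z = z'" using key2[OF pp po _ _ _ e2] pk[OF d(1)] d d' EF by auto
    then show "a = b" unfolding ad bd using \<open>d = d'\<close> by simp
  qed
  have himg: "h ` ((\<Delta> - {0}) \<times> E) \<subseteq> tri ` T \<times> (UNIV :: bool set)"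
  proof
    fix w assume "w \<in> h ` ((\<Delta> - {0}) \<times> E)"
    then obtain d z where dz: "d \<in> \<Delta>" "z \<in> E" "w = h (d,z)" by auto
    have "(fst (pk d), snd (pk d), z) \<in> T" unfolding TE using pk[OF dz(1)] dz(2) by simp
    then show "w \<in> tri ` T \<times> (UNIV :: bool set)" unfolding dz(3) h_def by auto
  qed
  have fin2: "finite (tri ` T \<times> (UNIV :: bool set))" using finT by simp
  have "card ((\<Delta> - {0}) \<times> E) \<le> card (tri ` T \<times> (UNIV :: bool set))"
    by (rule card_inj_on_le[OF inj himg fin2])
  then have cnt: "card (\<Delta> - {0}) * card E \<le> card (tri ` T) * 2"
    by (simp add: card_cartesian_product)
  have finD: "finite \<Delta>"
  proof -
    have "\<Delta> = (\<lambda>(x,y). sqdist p x y) ` (E \<times> E)" unfolding \<Delta>_def Delta_def by auto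
    then show ?thesis using finE by simp
  qed
  have kk: "card \<Delta> \<le> card (\<Delta> - {0}) + 1"
  proof -
    have "\<Delta> \<subseteq> insert 0 (\<Delta> - {0})" by auto
    then have "card \<Delta> \<le> card (insert 0 (\<Delta> - {0}))" using finD by (intro card_mono) auto
    also have "\<dots> \<le> card (\<Delta> - {0}) + 1" using card_insert_le_m1 by (metis Suc_eq_plus1 card_insert_if eq_imp_le finD finite_Diff le_SucI)
    finally show ?thesis .
  qed
  have cE: "card E = card A * card A" unfolding E_def by (simp add: card_cartesian_product)
  define n where "n = card A"
  define k where "k = card \<Delta>"
  define D where "D = card (tri ` T)"
  define C where "C = card (T22 p (A \<times> A))"
  show ?thesis
  proof (cases "n \<le> 1")
    case True
    then have "real n ^ 2 \<le> 1" by (cases n) auto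
    then have "1/6 * (real n^2 - 2) \<le> 0" by simp
    then have "1/6 * (real n^2 - 2) * real k \<le> 0"
      by (rule mult_nonpos_nonneg) simp
    then show ?thesis unfolding n_def k_def \<Delta>_def E_def by simp
  next
    case False
    then obtain a where a: "a \<in> A" using n_def by fastforce
    have "card (A - {a}) \<ge> 1" using False a finA unfolding n_def by simp
    then have "A - {a} \<noteq> {}" by (metis card.empty not_one_le_zero)
    then obtain b where b: "b \<in> A" "b \<noteq> a" by blast
    have ab: "0 \<le> a" "a < p" "0 \<le> b" "b < p" using a b assms(3) unfolding Fp_def by auto
    have nd: "\<not> p dvd a - b" using eq_of_dvd[OF ab] b(2) by auto
    have "\<not> p dvd (a-b)^2" using nd pp by (simp add: prime_dvd_power_iff)
    then have e0: "sqdist p (a,a) (b,a) \<noteq> 0" unfolding sqdist_def by (simp add: dvd_eq_mod_eq_0)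
    have "sqdist p (a,a) (a,a) = 0" unfolding sqdist_def by simp
    moreover have aa: "(a,a) \<in> A \<times> A" "(b,a) \<in> A \<times> A" using a b by auto
    ultimately have "0 = sqdist p (a,a) (a,a) \<and> (a,a) \<in> A \<times> A \<and> (a,a) \<in> A \<times> A" by simp
    then have z0: "0 \<in> \<Delta>" unfolding \<Delta>_def Delta_def E_def
      by (intro CollectI exI)
    have "sqdist p (a,a) (b,a) = sqdist p (a,a) (b,a) \<and> (a,a) \<in> A \<times> A \<and> (b,a) \<in> A \<times> A" using aa by simp
    then have "sqdist p (a,a) (b,a) \<in> \<Delta>" unfolding \<Delta>_def Delta_def E_def by (intro CollectI exI)
    with z0 have "{0, sqdist p (a,a) (b,a)} \<subseteq> \<Delta>" by blast
    then have "card {0, sqdist p (a,a) (b,a)} \<le> k" unfolding k_def using finD by (rule card_mono[rotated])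
    then have k2: "k \<ge> 2" using e0 by simp
    have r1n: "card (\<Delta> - {0}) * (n*n) \<le> D * 2" using cnt cE unfolding D_def n_def by simp
    have "real (card (\<Delta> - {0}) * (n*n)) \<le> real (D * 2)" using r1n by (simp only: of_nat_le_iff)
    then have r1: "real (card (\<Delta> - {0})) * real (n*n) \<le> real D * 2" by simp
    have r2: "real k - 1 \<le> real (card (\<Delta> - {0}))" using kk unfolding k_def by linarith
    have "(real k - 1) * real (n*n) \<le> real (card (\<Delta> - {0})) * real (n*n)"
      using r2 by (intro mult_right_mono) auto
    with r1 have r3: "(real k - 1) * real (n*n) \<le> real D * 2" by linarith
    have r4: "real D \<le> real C" using cardA unfolding D_def C_def by simp
    define N where "N = real (n*n)"
    have N0: "N \<ge> 0" unfolding N_def by simp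
    have "N * (real k - 2) \<ge> 0" using N0 k2 by (intro mult_nonneg_nonneg) auto
    moreover have "3*((real k - 1) * N) - (N - 2) * real k = 2*(N * (real k - 2)) + N + 2*real k"
      by (simp add: algebra_simps)
    ultimately have "(N - 2) * real k \<le> 3*((real k - 1) * N)" using N0 by linarith
    with r3 r4 have "(N - 2) * real k \<le> 6 * real C" unfolding N_def by linarith
    moreover have "N = real n ^ 2" unfolding N_def by (simp add: power2_eq_square)
    ultimately show ?thesis unfolding n_def k_def C_def \<Delta>_def E_def by simp
  qed
qed

end
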